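(* Let $I_A$ and $I_B$ be two MatP instances with the same underlying graph $G=(W\cup F,E)$ that differ only in the preference order of a single agent $x\in W\cup F$. Let $e=\{x,y\}\in E$ and let $I_H$ be a hybrid instance of $(I_A,I_B)$ with respect to $e$. Let $M$ be a matching with $e\in M$. Then: (1) if $M$ is robust popular with respect to $I_A$ and $I_B$, then $M$ is popular for $I_H$; (2) if $M$ is robust dominant with respect to $I_A$ and $I_B$, then $M$ is dominant for $I_H$.
   Context: An instance $I$ of matchings under preferences (MatP) consists of a bipartite graph $G^I=(W\cup F,E^I)$ with disjoint finite vertex sets $W$ (workers) and $F$ (firms), whose elements are called agents, together with, for each agent $x$, a strict linear order $\succ_x^I$ (preference order) over the set $N_x^I$ of neighbors of $x$ in $G^I$. A matching is a set of pairwise disjoint edges; $M(x)$ denotes the partner of a matched agent $x$. Agent $x$ prefers $M$ over $M'$ if $x$ is matched in $M$ and unmatched in $M'$, or matched in both with $M(x)\succ_x M'(x)$. Define $\mathrm{vote}^I_x(M,M')=1$ if $x$ prefers $M$ over $M'$, $-1$ if $x$ prefers $M'$ over $M$, and $0$ otherwise, and the popularity margin $\phi^I(M,M')=\sum_{x\in W\cup F}\mathrm{vote}^I_x(M,M')$. A matching $M$ of $G^I$ is popular for $I$ if $\phi^I(M,M')\ge 0$ for every matching $M'$ of $G^I$; it is dominant for $I$ if it is popular and $\phi^I(M,M')>0$ for every matching $M'$ of $G^I$ with $|M'|>|M|$. For two instances $I_A,I_B$ on the same agent sets, a matching is robust popular (resp. robust dominant) with respect to $I_A$ and $I_B$ if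 it is popular (resp. dominant) for both $I_A$ and $I_B$. Hybrid instance: suppose $I_A,I_B$ have the same graph $G$ and differ only in the preferences of agent $x$, and let $e=\{x,y\}\in E$. Let $P^A=\{z: z\succ_x^{I_A} y\}$ and $P^B=\{z: z\succ_x^{I_B} y\}$. A hybrid instance $I_H$ of $(I_A,I_B)$ with respect to $e$ is the MatP instance on $G$ in which every agent $z\neq x$ has preference order $\succ_z^{I_A}$, and $x$ has any linear order $\succ'$ on $N_x$ such that $z\succ' y$ for all $z\in P^A\cup P^B$ and $y\succ' z$ for all $z\in N_x\setminus(P^A\cup P^B\cup\{y\})$. *)

theory Defs
  imports Main
begin

(* Preferences: P x is a relation on agents; (a,b) \<in> P x means  a \<succ>_x b. *)

definition bipartite_graph :: "'a set \<Rightarrow> 'a set \<Rightarrow> 'a set set \<Rightarrow> bool" where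
  "bipartite_graph W F E \<longleftrightarrow> finite W \<and> finite F \<and> W \<inter> F = {} \<and>
     E \<subseteq> {{w, f} | w f. w \<in> W \<and> f \<in> F}"

definition nbrs :: "'a set set \<Rightarrow> 'a \<Rightarrow> 'a set" where
  "nbrs E x = {y. {x, y} \<in> E}"

definition matp_instance :: "'a set \<Rightarrow> 'a set \<Rightarrow> 'a set set \<Rightarrow> ('a \<Rightarrow> 'a rel) \<Rightarrow> bool" where
  "matp_instance W F E P \<longleftrightarrow> bipartite_graph W F E \<and>
     (\<forall>x \<in> W \<union> F. P x \<subseteq> nbrs E x \<times> nbrs E x \<and> strict_linear_order_on (nbrs E x) (P x))"

definition matching :: "'a set set \<Rightarrow> 'a set set \<Rightarrow> bool" where
  "matching E M \<longleftrightarrow> M \<subseteq> E \<and> (\<forall>e \<in> M. \<forall>e' \<in> M. e \<noteq> e' \<longrightarrow> e \<inter> e' = {})"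

definition matched :: "'a set set \<Rightarrow> 'a \<Rightarrow> bool" where
  "matched M x \<longleftrightarrow> (\<exists>e \<in> M. x \<in> e)"

definition partner :: "'a set set \<Rightarrow> 'a \<Rightarrow> 'a" where
  "partner M x = (THE y. {x, y} \<in> M)"

definition prefers :: "('a \<Rightarrow> 'a rel) \<Rightarrow> 'a \<Rightarrow> 'a set set \<Rightarrow> 'a set set \<Rightarrow> bool" where
  "prefers P x M M' \<longleftrightarrow> matched M x \<and>
     (\<not> matched M' x \<or> (matched M' x \<and> (partner M x, partner M' x) \<in> P x))"

definition vote :: "('a \<Rightarrow> 'a rel) \<Rightarrow> 'a \<Rightarrow> 'a set set \<Rightarrow> 'a set set \<Rightarrow> int" where
  "vote P x M M' = (if prefers P x M M' then 1 else if prefers P x M' M then -1 else 0)"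

definition phi :: "'a set \<Rightarrow> 'a set \<Rightarrow> ('a \<Rightarrow> 'a rel) \<Rightarrow> 'a set set \<Rightarrow> 'a set set \<Rightarrow> int" where
  "phi W F P M M' = (\<Sum>x \<in> W \<union> F. vote P x M M')"

definition popular :: "'a set \<Rightarrow> 'a set \<Rightarrow> 'a set set \<Rightarrow> ('a \<Rightarrow> 'a rel) \<Rightarrow> 'a set set \<Rightarrow> bool" where
  "popular W F E P M \<longleftrightarrow> matching E M \<and> (\<forall>M'. matching E M' \<longrightarrow> phi W F P M M' \<ge> 0)"

definition dominant :: "'a set \<Rightarrow> 'a set \<Rightarrow> 'a set set \<Rightarrow> ('a \<Rightarrow> 'a rel) \<Rightarrow> 'a set set \<Rightarrow> bool" where
  "dominant W F E P M \<longleftrightarrow> popular W F E P M \<and>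
     (\<forall>M'. matching E M' \<and> card M' > card M \<longrightarrow> phi W F P M M' > 0)"

definition hybrid :: "'a set set \<Rightarrow> ('a \<Rightarrow> 'a rel) \<Rightarrow> ('a \<Rightarrow> 'a rel) \<Rightarrow> 'a \<Rightarrow> 'a
                      \<Rightarrow> ('a \<Rightarrow> 'a rel) \<Rightarrow> bool" where
  "hybrid E PA PB x y PH \<longleftrightarrow>
     (\<forall>z. z \<noteq> x \<longrightarrow> PH z = PA z) \<and>
     PH x \<subseteq> nbrs E x \<times> nbrs E x \<and> strict_linear_order_on (nbrs E x) (PH x) \<and>
     (let Pset = {z. (z, y) \<in> PA x} \<union> {z. (z, y) \<in> PB x} in
       (\<forall>z \<in> Pset. (z, y) \<in> PH x) \<and>
       (\<forall>z \<in> nbrs E x - (Pset \<union> {y}). (y, z) \<in> PH x))"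

end

theory Submission
  imports Defs
begin

lemma slo_irr: "strict_linear_order_on A r \<Longrightarrow> (a,a) \<notin> r"
  by (simp add: strict_linear_order_on_def irrefl_def)

lemma slo_asym: "strict_linear_order_on A r \<Longrightarrow> (a,b) \<in> r \<Longrightarrow> (b,a) \<notin> r"
  unfolding strict_linear_order_on_def irrefl_def trans_def by blast

lemma partner_eq:
  assumes "matching E M" "{x,y} \<in> M" "x \<noteq> y"
  shows "partner M x = y"
  unfolding partner_def
proof (rule the_equality)
  show "{x,y} \<in> M" by fact
next
  fix z assume z: "{x,z} \<in> M"
  have m: "\<forall>e \<in> M. \<forall>e' \<in> M. e \<noteq> e' \<longrightarrow> e \<inter> e' = {}"
    using assms(1) unfolding matching_def by simp
  have ne: "{x,z} \<inter> {x,y} \<noteq> {}" by simp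
  have "{x,z} = {x,y}"
    using m[rule_format, OF z assms(2)] ne by metis
  then show "z = y" using assms(3) by (auto simp: doubleton_eq_iff)
qed

lemma matched_partner:
  assumes "bipartite_graph W F E" "matching E M'" "matched M' x"
  shows "\<exists>z. {x,z} \<in> M' \<and> z \<noteq> x \<and> partner M' x = z"
proof -
  obtain e where e: "e \<in> M'" "x \<in> e" using assms(3) unfolding matched_def by blast
  then have "e \<in> E" using assms(2) unfolding matching_def by blast
  then obtain w f where wf: "e = {w,f}" "w \<in> W" "f \<in> F"
    using assms(1) unfolding bipartite_graph_def by blast
  have "w \<noteq> f" using wf assms(1) unfolding bipartite_graph_def by blast
  have "\<exists>z. e = {x,z} \<and> z \<noteq> x"
  proof (cases "x = w")
    case True then show ?thesis using wf \<open>w \<noteq> f\<close> by auto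
  next
    case False then have "x = f" using wf e by auto
    then show ?thesis using wf \<open>w \<noteq> f\<close> by auto
  qed
  then obtain z where z: "e = {x,z}" "z \<noteq> x" by blast
  have "partner M' x = z" using partner_eq[OF assms(2)] z e by simp
  then show ?thesis using z e by blast
qed

lemma vote_bounds: "vote P x M M' \<le> 1" "vote P x M M' \<ge> -1"
  unfolding vote_def by auto

lemma vote_x:
  assumes A: "matp_instance W F E PA" and B: "matp_instance W F E PB"
    and x: "x \<in> W \<union> F"
    and xy: "{x, y} \<in> E"
    and H: "hybrid E PA PB x y PH"
    and M: "matching E M" and e: "{x, y} \<in> M"
    and M': "matching E M'"
  shows "vote PH x M M' \<ge> min (vote PA x M M') (vote PB x M M')"
proof -
  have bg: "bipartite_graph W F E" using A unfolding matp_instance_def by blast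
  have "x \<noteq> y"
  proof
    assume "x = y"
    then have "{x} \<in> E" using xy by simp
    then obtain w f where "{x} = {w,f}" "w \<in> W" "f \<in> F"
      using bg unfolding bipartite_graph_def by blast
    moreover have "w = x" "f = x" using calculation(1) by (auto simp: doubleton_eq_iff)
    ultimately show False using bg unfolding bipartite_graph_def by blast
  qed
  then have pM: "partner M x = y" using partner_eq[OF M e] by simp
  have mM: "matched M x" using e unfolding matched_def by blast
  have sA: "strict_linear_order_on (nbrs E x) (PA x)" using A x unfolding matp_instance_def by blast
  have sB: "strict_linear_order_on (nbrs E x) (PB x)" using B x unfolding matp_instance_def by blast
  have sH: "strict_linear_order_on (nbrs E x) (PH x)" using H unfolding hybrid_def by blast
  define Pset where "Pset = {z. (z, y) \<in> PA x} \<union> {z. (z, y) \<in> PB x}"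
  have H1: "\<forall>z \<in> Pset. (z, y) \<in> PH x" and H2: "\<forall>z \<in> nbrs E x - (Pset \<union> {y}). (y, z) \<in> PH x"
  proof -
    have "let Pset = {z. (z, y) \<in> PA x} \<union> {z. (z, y) \<in> PB x} in
       (\<forall>z \<in> Pset. (z, y) \<in> PH x) \<and>
       (\<forall>z \<in> nbrs E x - (Pset \<union> {y}). (y, z) \<in> PH x)"
      using H unfolding hybrid_def by blast
    then have "(\<forall>z \<in> Pset. (z, y) \<in> PH x) \<and>
       (\<forall>z \<in> nbrs E x - (Pset \<union> {y}). (y, z) \<in> PH x)"
      by (simp only: Let_def Pset_def[symmetric])
    then show "\<forall>z \<in> Pset. (z, y) \<in> PH x" "\<forall>z \<in> nbrs E x - (Pset \<union> {y}). (y, z) \<in> PH x"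
      by blast+
  qed
  show ?thesis
  proof (cases "matched M' x")
    case False
    then have "\<And>P. vote P x M M' = 1" using mM unfolding vote_def prefers_def by auto
    then show ?thesis by simp
  next
    case True
    obtain z where z: "{x,z} \<in> M'" "partner M' x = z"
      using matched_partner[OF bg M' True] by blast
    have vt: "\<And>P. vote P x M M' = (if (y,z) \<in> P x then 1 else if (z,y) \<in> P x then -1 else 0)"
      unfolding vote_def prefers_def using True mM pM z(2) by auto
    have zn: "z \<in> nbrs E x" using z M' unfolding matching_def nbrs_def by blast
    show ?thesis
    proof (cases "z \<in> Pset")
      case True
      then have "(z,y) \<in> PH x" using H1 by blast
      moreover have "(y,z) \<notin> PH x" using calculation slo_asym[OF sH] by blast
      ultimately have "vote PH x M M' = -1" using vt[of PH] by simp
      moreover have "vote PA x M M' = -1 \<or> vote PB x M M' = -1"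
      proof -
        have "(z,y) \<in> PA x \<or> (z,y) \<in> PB x" using True unfolding Pset_def by blast
        then show ?thesis
        proof
          assume a: "(z,y) \<in> PA x"
          then have "(y,z) \<notin> PA x" using slo_asym[OF sA] by blast
          then show ?thesis using a vt[of PA] by simp
        next
          assume a: "(z,y) \<in> PB x"
          then have "(y,z) \<notin> PB x" using slo_asym[OF sB] by blast
          then show ?thesis using a vt[of PB] by simp
        qed
      qed
      ultimately show ?thesis by auto
    next
      case False
      show ?thesis
      proof (cases "z = y")
        case True
        have "vote PH x M M' = 0" using vt[of PH] slo_irr[OF sH, of y] True by simp
        moreover have "vote PA x M M' = 0" using vt[of PA] slo_irr[OF sA, of y] True by simp
        ultimately show ?thesis by simp
      next
        case False2: False
        then have "(y,z) \<in> PH x" using H2 False zn by blast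
        then have "vote PH x M M' = 1" using vt[of PH] by simp
        then show ?thesis using vote_bounds[of PA x M M'] by auto
      qed
    qed
  qed
qed

lemma phi_min:
  assumes A: "matp_instance W F E PA" and B: "matp_instance W F E PB"
    and x: "x \<in> W \<union> F"
    and AB: "\<forall>z. z \<noteq> x \<longrightarrow> PA z = PB z"
    and xy: "{x, y} \<in> E"
    and H: "hybrid E PA PB x y PH"
    and M: "matching E M" and e: "{x, y} \<in> M"
    and M': "matching E M'"
  shows "phi W F PH M M' \<ge> min (phi W F PA M M') (phi W F PB M M')"
proof -
  have fin: "finite (W \<union> F)" using A unfolding matp_instance_def bipartite_graph_def by blast
  define R where "R = W \<union> F - {x}"
  have split: "\<And>P. phi W F P M M' = vote P x M M' + (\<Sum>z\<in>R. vote P z M M')"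
    unfolding phi_def R_def using fin x by (simp add: sum.remove)
  have HA: "\<forall>z. z \<noteq> x \<longrightarrow> PH z = PA z" using H unfolding hybrid_def by blast
  have eqs: "(\<Sum>z\<in>R. vote PH z M M') = (\<Sum>z\<in>R. vote PA z M M')"
            "(\<Sum>z\<in>R. vote PB z M M') = (\<Sum>z\<in>R. vote PA z M M')"
    by (rule sum.cong; simp add: R_def HA AB vote_def prefers_def)+
  have "vote PH x M M' \<ge> min (vote PA x M M') (vote PB x M M')"
    by (rule vote_x[OF A B x xy H M e M'])
  then show ?thesis using split[of PH] split[of PA] split[of PB] eqs by linarith
qed

theorem lemma2:
  fixes W F :: "'a set" and E :: "'a set set" and PA PB PH :: "'a \<Rightarrow> 'a rel"
    and x y :: 'a and M :: "'a set set"
  assumes "matp_instance W F E PA"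
    and "matp_instance W F E PB"
    and "x \<in> W \<union> F"
    and "\<forall>z. z \<noteq> x \<longrightarrow> PA z = PB z"
    and "{x, y} \<in> E"
    and "hybrid E PA PB x y PH"
    and "matching E M"
    and "{x, y} \<in> M"
  shows "(popular W F E PA M \<and> popular W F E PB M \<longrightarrow> popular W F E PH M) \<and>
         (dominant W F E PA M \<and> dominant W F E PB M \<longrightarrow> dominant W F E PH M)"
proof -
  have pm: "\<And>M'. matching E M' \<Longrightarrow> phi W F PH M M' \<ge> min (phi W F PA M M') (phi W F PB M M')"
    by (rule phi_min[OF assms])
  have P: "popular W F E PA M \<and> popular W F E PB M \<longrightarrow> popular W F E PH M"
  proof
    assume h: "popular W F E PA M \<and> popular W F E PB M"
    show "popular W F E PH M" unfolding popular_def
    proof (intro conjI allI impI)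
      show "matching E M" by fact
      fix M' assume "matching E M'"
      then show "phi W F PH M M' \<ge> 0" using pm[of M'] h unfolding popular_def by fastforce
    qed
  qed
  moreover have "dominant W F E PA M \<and> dominant W F E PB M \<longrightarrow> dominant W F E PH M"
  proof
    assume h: "dominant W F E PA M \<and> dominant W F E PB M"
    then have "popular W F E PH M" using P unfolding dominant_def by blast
    moreover have "\<forall>M'. matching E M' \<and> card M' > card M \<longrightarrow> phi W F PH M M' > 0"
    proof (intro allI impI)
      fix M' assume m: "matching E M' \<and> card M' > card M"
      then show "phi W F PH M M' > 0" using pm[of M'] h unfolding dominant_def by fastforce
    qed
    ultimately show "dominant W F E PH M" unfolding dominant_def by blast
  qed
  ultimately show ?thesis by blast
qed

end
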